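(* Let $I_1,I_2>0$ with $I_1\neq I_2$, $\alpha_i=1+I_i$, $\beta_i=1-I_i$, and $M>0$. Consider the system on $\mathbb{R}^2$ $$\dot\theta_1=\alpha_1+\beta_1\cos\theta_1+(1-\cos\theta_1)u,\qquad \dot\theta_2=\alpha_2+\beta_2\cos\theta_2+(1-\cos\theta_2)u,$$ with measurable controls satisfying $|u(t)|\le M$, and the time-optimal control problem of steering $(\theta_1,\theta_2)(0)=(0,0)$ to $(\theta_1,\theta_2)(T)=(2m_1\pi,2m_2\pi)$, $m_1,m_2$ positive integers, in minimum time $T$. Then for any extremal of this problem given by Pontryagin's maximum principle (Hamiltonian $H=\lambda_0+\langle\lambda, f+Zu\rangle$ with $f=(\alpha_1+\beta_1\cos\theta_1,\alpha_2+\beta_2\cos\theta_2)'$, $Z=(1-\cos\theta_1,1-\cos\theta_2)'$), the switching function $\phi(t)=\langle\lambda(t),Z(\Theta(t))\rangle$ does not vanish identically on any time interval of positive length. Consequently a minimum-time control is bang-bang: $u(t)=M$ when $\phi(t)<0$ and $u(t)=-M$ when $\phi(t)>0$, so that $u(t)\in\{-M,M\}$ for almost every $t$.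
   Context: Here $\lambda(t)\in\mathbb{R}^2$ is the costate of the maximum principle (nonzero, satisfying the adjoint equation $\dot\lambda=-\partial H/\partial\Theta$), and the optimal control minimizes the Hamiltonian pointwise over $|u|\le M$. *)

theory Defs
  imports "HOL-Analysis.Analysis"
begin

definition alpha :: "real \<Rightarrow> real" where "alpha I = 1 + I"
definition beta :: "real \<Rightarrow> real" where "beta I = 1 - I"

definition fcomp :: "real \<Rightarrow> real \<Rightarrow> real" where
  "fcomp I th = alpha I + beta I * cos th"
definition Zcomp :: "real \<Rightarrow> real" where
  "Zcomp th = 1 - cos th"

definition Ham :: "real \<Rightarrow> real \<Rightarrow> real \<Rightarrow> real \<Rightarrow> real \<Rightarrow> real \<Rightarrow> real \<Rightarrow> real \<Rightarrow> real" where
  "Ham I1 I2 l0 l1 l2 th1 th2 v =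
     l0 + l1 * (fcomp I1 th1 + Zcomp th1 * v) + l2 * (fcomp I2 th2 + Zcomp th2 * v)"

definition switching :: "(real \<Rightarrow> real) \<Rightarrow> (real \<Rightarrow> real) \<Rightarrow> (real \<Rightarrow> real) \<Rightarrow> (real \<Rightarrow> real) \<Rightarrow> real \<Rightarrow> real" where
  "switching l1 l2 th1 th2 t = l1 t * Zcomp (th1 t) + l2 t * Zcomp (th2 t)"

definition admissible ::
  "real \<Rightarrow> real \<Rightarrow> real \<Rightarrow> nat \<Rightarrow> nat \<Rightarrow> real \<Rightarrow> (real \<Rightarrow> real) \<Rightarrow> (real \<Rightarrow> real) \<Rightarrow> (real \<Rightarrow> real) \<Rightarrow> bool" where
  "admissible I1 I2 M m1 m2 T th1 th2 u \<longleftrightarrow>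
     0 < T \<and>
     u \<in> borel_measurable (lebesgue_on {0..T}) \<and>
     (\<forall>t\<in>{0..T}. \<bar>u t\<bar> \<le> M) \<and>
     th1 0 = 0 \<and> th2 0 = 0 \<and>
     th1 T = 2 * real m1 * pi \<and> th2 T = 2 * real m2 * pi \<and>
     (\<forall>t\<in>{0..T}.
        ((\<lambda>s. fcomp I1 (th1 s) + Zcomp (th1 s) * u s) has_integral (th1 t - th1 0)) {0..t} \<and>
        ((\<lambda>s. fcomp I2 (th2 s) + Zcomp (th2 s) * u s) has_integral (th2 t - th2 0)) {0..t})"

text \<open>Extremal of the PMP for the time-optimal problem: nonzero costate satisfying
  the adjoint equation dlambda_i/dt = - dH/dtheta_i = lambda_i sin theta_i (beta_i - u)
  (in integral form), lambda0 >= 0, u minimizes H pointwise a.e. over |v| <= M, and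
  H vanishes a.e. (free final time).\<close>
definition pmp_extremal ::
  "real \<Rightarrow> real \<Rightarrow> real \<Rightarrow> nat \<Rightarrow> nat \<Rightarrow> real \<Rightarrow> (real \<Rightarrow> real) \<Rightarrow> (real \<Rightarrow> real) \<Rightarrow> (real \<Rightarrow> real)
   \<Rightarrow> real \<Rightarrow> (real \<Rightarrow> real) \<Rightarrow> (real \<Rightarrow> real) \<Rightarrow> bool" where
  "pmp_extremal I1 I2 M m1 m2 T th1 th2 u l0 l1 l2 \<longleftrightarrow>
     admissible I1 I2 M m1 m2 T th1 th2 u \<and>
     0 \<le> l0 \<and>
     (\<forall>t\<in>{0..T}. (l1 t, l2 t) \<noteq> (0, 0)) \<and>
     (\<forall>t\<in>{0..T}.
        ((\<lambda>s. l1 s * sin (th1 s) * (beta I1 - u s)) has_integral (l1 t - l1 0)) {0..t} \<and>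
        ((\<lambda>s. l2 s * sin (th2 s) * (beta I2 - u s)) has_integral (l2 t - l2 0)) {0..t}) \<and>
     (AE t in lebesgue_on {0..T}.
        (\<forall>v. \<bar>v\<bar> \<le> M \<longrightarrow>
           Ham I1 I2 l0 (l1 t) (l2 t) (th1 t) (th2 t) (u t) \<le> Ham I1 I2 l0 (l1 t) (l2 t) (th1 t) (th2 t) v)) \<and>
     (AE t in lebesgue_on {0..T}. Ham I1 I2 l0 (l1 t) (l2 t) (th1 t) (th2 t) (u t) = 0)"

end

theory Submission
  imports Defs
begin


definition Wf :: "(real \<Rightarrow> real) \<Rightarrow> real \<Rightarrow> real" where
  "Wf u t = integral {0..t} u"

definition Gam :: "(real \<Rightarrow> real) \<Rightarrow> real \<Rightarrow> (real \<times> real) set" where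
  "Gam u T = (\<lambda>t. (t, Wf u t)) ` {0..T}"

definition Dv :: "(real \<Rightarrow> real) \<Rightarrow> real \<Rightarrow> (real \<Rightarrow> real) \<Rightarrow> real \<Rightarrow> real \<Rightarrow> real \<Rightarrow> bool" where
  "Dv u T P p q x \<longleftrightarrow> ((\<lambda>z::real\<times>real. P (fst z)) has_derivative (\<lambda>z. p * fst z + q * snd z))
      (at (x, Wf u x) within Gam u T)"

lemma split_int:
  fixes g P :: "real \<Rightarrow> real"
  assumes h: "\<forall>t\<in>{0..T}. (g has_integral (P t - P 0)) {0..t}" and "0 \<le> a" "a \<le> b" "b \<le> T"
  shows "(g has_integral (P b - P a)) {a..b}"
proof -
  have gb: "(g has_integral (P b - P 0)) {0..b}" using h assms by auto
  have ga: "(g has_integral (P a - P 0)) {0..a}" using h assms by auto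
  have ib: "g integrable_on {0..b}" using gb by blast
  have iab: "g integrable_on {a..b}" by (rule integrable_subinterval_real[OF ib]) (use assms in auto)
  have "integral {0..a} g + integral {a..b} g = integral {0..b} g"
    by (rule Henstock_Kurzweil_Integration.integral_combine) (use assms ib in auto)
  moreover have "integral {0..a} g = P a - P 0" using ga by (simp add: integral_unique)
  moreover have "integral {0..b} g = P b - P 0" using gb by (simp add: integral_unique)
  ultimately have "integral {a..b} g = P b - P a" by simp
  with iab show ?thesis by (metis has_integral_integral)
qed

lemma cont_int:
  fixes g P :: "real \<Rightarrow> real"
  assumes h: "\<forall>t\<in>{0..T}. (g has_integral (P t - P 0)) {0..t}" and T: "0 \<le> T"
  shows "continuous_on {0..T} P"
proof -
  have "g integrable_on {0..T}" using h T by auto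
  then have c: "continuous_on {0..T} (\<lambda>t. integral {0..t} g)" by (rule indefinite_integral_continuous_1)
  have "continuous_on {0..T} (\<lambda>t. P 0 + integral {0..t} g)" by (intro continuous_intros c)
  moreover have "\<forall>t\<in>{0..T}. P 0 + integral {0..t} g = P t" using h by (auto simp: integral_unique)
  ultimately show ?thesis using continuous_on_eq by blast
qed

lemma W_int:
  assumes "u integrable_on {0..T}"
  shows "\<forall>t\<in>{0..T}. (u has_integral (Wf u t - Wf u 0)) {0..t}"
proof
  fix t assume t: "t \<in> {0..T}"
  have "u integrable_on {0..t}" by (rule integrable_subinterval_real[OF assms]) (use t in auto)
  then show "(u has_integral (Wf u t - Wf u 0)) {0..t}"
    by (simp add: Wf_def has_integral_integral)
qed

lemma W_lip:
  assumes ui: "u integrable_on {0..T}" and ub: "\<forall>s\<in>{0..T}. \<bar>u s\<bar> \<le> M"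
    and x: "x \<in> {0..T}" and t: "t \<in> {0..T}"
  shows "\<bar>Wf u t - Wf u x\<bar> \<le> M * \<bar>t - x\<bar>"
proof -
  have M: "0 \<le> M" using ub x by force
  have key: "\<bar>Wf u b - Wf u a\<bar> \<le> M * (b - a)" if "0 \<le> a" "a \<le> b" "b \<le> T" for a b
  proof -
    have i: "(u has_integral (Wf u b - Wf u a)) {a..b}"
      by (rule split_int[OF W_int[OF ui]]) (use that in auto)
    have "norm (Wf u b - Wf u a) \<le> M * Henstock_Kurzweil_Integration.content {a..b}"
      by (rule has_integral_bound_real[OF _ _ i, where S="{}"]) (use M ub that in auto)
    then show ?thesis using that by simp
  qed
  show ?thesis
  proof (cases "x \<le> t")
    case True then show ?thesis using key[of x t] x t by auto
  next
    case False then show ?thesis using key[of t x] x t by (auto simp: abs_minus_commute)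
  qed
qed

lemma core_est:
  fixes p q u P :: "real \<Rightarrow> real"
  assumes hP: "\<forall>t\<in>{0..T}. ((\<lambda>s. p s + q s * u s) has_integral (P t - P 0)) {0..t}"
    and ui: "u integrable_on {0..T}" and ub: "\<forall>s\<in>{0..T}. \<bar>u s\<bar> \<le> M"
    and ab: "0 \<le> a" "a \<le> b" "b \<le> T" and e: "0 \<le> e"
    and close: "\<forall>s\<in>{a..b}. \<bar>p s - p x\<bar> \<le> e \<and> \<bar>q s - q x\<bar> \<le> e"
  shows "\<bar>P b - P a - p x * (b - a) - q x * (Wf u b - Wf u a)\<bar> \<le> e * (1 + M) * (b - a)"
proof -
  have M: "0 \<le> M" using ub ab by force
  have 1: "((\<lambda>s. p s + q s * u s) has_integral (P b - P a)) {a..b}"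
    by (rule split_int[OF hP]) (use ab in auto)
  have 2: "(u has_integral (Wf u b - Wf u a)) {a..b}"
    by (rule split_int[OF W_int[OF ui]]) (use ab in auto)
  have 3: "((\<lambda>s. p x) has_integral (p x * (b - a))) {a..b}"
    using has_integral_const_real[of "p x" a b] ab by (simp add: mult.commute)
  have 4: "((\<lambda>s. q x * u s) has_integral (q x * (Wf u b - Wf u a))) {a..b}"
    using has_integral_mult_right[OF 2] .
  have 5: "((\<lambda>s. p s + q s * u s - p x - q x * u s) has_integral
      (P b - P a - p x * (b - a) - q x * (Wf u b - Wf u a))) {a..b}"
    using has_integral_diff[OF has_integral_diff[OF 1 3] 4] .
  have pw: "norm (p s + q s * u s - p x - q x * u s) \<le> e * (1 + M)" if s: "s \<in> {a..b}" for s
  proof -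
    have us: "\<bar>u s\<bar> \<le> M" using ub s ab by auto
    have c: "\<bar>p s - p x\<bar> \<le> e" "\<bar>q s - q x\<bar> \<le> e" using close s by auto
    have "\<bar>(q s - q x) * u s\<bar> \<le> e * M"
      unfolding abs_mult by (rule mult_mono) (use c us e in auto)
    moreover have "p s + q s * u s - p x - q x * u s = (p s - p x) + (q s - q x) * u s"
      by (simp add: algebra_simps)
    ultimately show ?thesis using c by (simp add: algebra_simps)
  qed
  have "norm (P b - P a - p x * (b - a) - q x * (Wf u b - Wf u a)) \<le> e * (1 + M) * Henstock_Kurzweil_Integration.content {a..b}"
    by (rule has_integral_bound_real[OF _ _ 5, where S="{}"]) (use pw e M in auto)
  then show ?thesis using ab by simp
qed



lemma Dv_basic:
  fixes p q u P :: "real \<Rightarrow> real"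
  assumes hP: "\<forall>t\<in>{0..T}. ((\<lambda>s. p s + q s * u s) has_integral (P t - P 0)) {0..t}"
    and ui: "u integrable_on {0..T}" and ub: "\<forall>s\<in>{0..T}. \<bar>u s\<bar> \<le> M"
    and cp: "continuous_on {0..T} p" and cq: "continuous_on {0..T} q"
    and x: "x \<in> {0..T}"
  shows "Dv u T P (p x) (q x) x"
  unfolding Dv_def has_derivative_within_alt
proof (intro conjI allI impI)
  show "bounded_linear (\<lambda>z::real\<times>real. p x * fst z + q x * snd z)"
    by (intro bounded_linear_add bounded_linear_compose[OF bounded_linear_mult_right] bounded_linear_fst bounded_linear_snd)
  have M: "0 \<le> M" using ub x by force
  fix e :: real assume e: "0 < e"
  define e' where "e' = e / (1 + M)"
  have e': "0 < e'" using e M by (simp add: e'_def)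
  obtain d1 where d1: "d1 > 0" "\<forall>s\<in>{0..T}. dist s x < d1 \<longrightarrow> dist (p s) (p x) < e'"
    using cp x e' unfolding continuous_on_iff by blast
  obtain d2 where d2: "d2 > 0" "\<forall>s\<in>{0..T}. dist s x < d2 \<longrightarrow> dist (q s) (q x) < e'"
    using cq x e' unfolding continuous_on_iff by blast
  define d where "d = min d1 d2"
  have d: "d > 0" using d1 d2 by (simp add: d_def)
  have clos: "\<bar>p s - p x\<bar> \<le> e' \<and> \<bar>q s - q x\<bar> \<le> e'" if "s \<in> {0..T}" "\<bar>s - x\<bar> < d" for s
    using d1(2) d2(2) that by (fastforce simp: d_def dist_real_def)
  have ee: "e' * (1 + M) = e" using M by (simp add: e'_def)
  show "\<exists>d>0. \<forall>y\<in>Gam u T. norm (y - (x, Wf u x)) < d \<longrightarrow>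
          norm ((\<lambda>z. P (fst z)) y - (\<lambda>z. P (fst z)) (x, Wf u x) -
                (\<lambda>z. p x * fst z + q x * snd z) (y - (x, Wf u x)))
          \<le> e * norm (y - (x, Wf u x))"
  proof (intro exI[of _ d] conjI ballI impI d)
    fix y assume y: "y \<in> Gam u T" and yd: "norm (y - (x, Wf u x)) < d"
    then obtain t where t: "t \<in> {0..T}" and yt: "y = (t, Wf u t)" by (auto simp: Gam_def)
    have nle: "\<bar>t - x\<bar> \<le> norm (y - (x, Wf u x))"
      using norm_fst_le[of "t - x" "Wf u t - Wf u x"] by (simp add: yt)
    have td: "\<bar>t - x\<bar> < d" using nle yd by linarith
    have est: "\<bar>P t - P x - p x * (t - x) - q x * (Wf u t - Wf u x)\<bar> \<le> e * \<bar>t - x\<bar>"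
    proof (cases "x \<le> t")
      case True
      have "\<bar>P t - P x - p x * (t - x) - q x * (Wf u t - Wf u x)\<bar> \<le> e' * (1 + M) * (t - x)"
        by (rule core_est[OF hP ui ub]) (use True x t e' clos td in auto)
      then show ?thesis using True ee by simp
    next
      case False
      have "\<bar>P x - P t - p x * (x - t) - q x * (Wf u x - Wf u t)\<bar> \<le> e' * (1 + M) * (x - t)"
        by (rule core_est[OF hP ui ub]) (use False x t e' clos td in auto)
      moreover have "\<bar>P x - P t - p x * (x - t) - q x * (Wf u x - Wf u t)\<bar>
          = \<bar>P t - P x - p x * (t - x) - q x * (Wf u t - Wf u x)\<bar>"
        by (simp add: abs_minus_commute[symmetric] algebra_simps)
      ultimately show ?thesis using False ee by simp
    qed
    also have "\<dots> \<le> e * norm (y - (x, Wf u x))" using nle e by simp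
    finally show "norm ((\<lambda>z. P (fst z)) y - (\<lambda>z. P (fst z)) (x, Wf u x) -
                (\<lambda>z. p x * fst z + q x * snd z) (y - (x, Wf u x)))
          \<le> e * norm (y - (x, Wf u x))" by (simp add: yt algebra_simps)
  qed
qed

lemma Dv_real:
  fixes g u :: "real \<Rightarrow> real"
  assumes D: "Dv u T g p 0 x"
    and ui: "u integrable_on {0..T}" and ub: "\<forall>s\<in>{0..T}. \<bar>u s\<bar> \<le> M"
    and x: "x \<in> {0..T}"
  shows "\<forall>e>0. \<exists>d>0. \<forall>t\<in>{0..T}. \<bar>t - x\<bar> < d \<longrightarrow> \<bar>g t - g x - p * (t - x)\<bar> \<le> e * \<bar>t - x\<bar>"
proof (intro allI impI)
  have M: "0 \<le> M" using ub x by force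
  fix e :: real assume e: "0 < e"
  have "\<forall>e>0. \<exists>d>0. \<forall>y\<in>Gam u T. norm (y - (x, Wf u x)) < d \<longrightarrow>
          norm ((\<lambda>z. g (fst z)) y - (\<lambda>z. g (fst z)) (x, Wf u x) -
                (\<lambda>z. p * fst z + 0 * snd z) (y - (x, Wf u x)))
          \<le> e * norm (y - (x, Wf u x))"
    using D unfolding Dv_def has_derivative_within_alt by blast
  moreover have "e / (1 + M) > 0" using e M by simp
  ultimately obtain d where d: "d > 0" and dd: "\<forall>y\<in>Gam u T. norm (y - (x, Wf u x)) < d \<longrightarrow>
          norm ((\<lambda>z. g (fst z)) y - (\<lambda>z. g (fst z)) (x, Wf u x) -
                (\<lambda>z. p * fst z + 0 * snd z) (y - (x, Wf u x)))
          \<le> (e / (1 + M)) * norm (y - (x, Wf u x))"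
    by blast
  show "\<exists>d>0. \<forall>t\<in>{0..T}. \<bar>t - x\<bar> < d \<longrightarrow> \<bar>g t - g x - p * (t - x)\<bar> \<le> e * \<bar>t - x\<bar>"
  proof (intro exI[of _ "d / (1 + M)"] conjI ballI impI)
    show "0 < d / (1 + M)" using d M by simp
    fix t assume t: "t \<in> {0..T}" and td: "\<bar>t - x\<bar> < d / (1 + M)"
    have wl: "\<bar>Wf u t - Wf u x\<bar> \<le> M * \<bar>t - x\<bar>" by (rule W_lip[OF ui ub x t])
    have n1: "norm ((t, Wf u t) - (x, Wf u x)) \<le> (1 + M) * \<bar>t - x\<bar>"
      using norm_Pair_le[of "t - x" "Wf u t - Wf u x"] wl by (simp add: algebra_simps)
    have "(1 + M) * \<bar>t - x\<bar> < d" using td M by (simp add: field_simps)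
    then have "norm ((t, Wf u t) - (x, Wf u x)) < d" using n1 by linarith
    moreover have "(t, Wf u t) \<in> Gam u T" using t by (auto simp: Gam_def)
    ultimately have "\<bar>g t - g x - p * (t - x)\<bar> \<le> (e / (1 + M)) * norm ((t, Wf u t) - (x, Wf u x))"
      using dd by auto
    also have "\<dots> \<le> (e / (1 + M)) * ((1 + M) * \<bar>t - x\<bar>)"
      by (rule mult_left_mono[OF n1]) (use e M in auto)
    also have "\<dots> = e * \<bar>t - x\<bar>" using M by simp
    finally show "\<bar>g t - g x - p * (t - x)\<bar> \<le> e * \<bar>t - x\<bar>" .
  qed
qed



lemma deriv_zero_limpt:
  fixes g :: "real \<Rightarrow> real"
  assumes est: "\<forall>e>0. \<exists>d>0. \<forall>t\<in>{0..T}. \<bar>t - x\<bar> < d \<longrightarrow> \<bar>g t - g x - p * (t - x)\<bar> \<le> e * \<bar>t - x\<bar>"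
    and lim: "\<forall>d>0. \<exists>y\<in>{0..T}. y \<noteq> x \<and> \<bar>y - x\<bar> < d \<and> g y = g x"
  shows "p = 0"
proof (rule ccontr)
  assume p: "p \<noteq> 0"
  then have "\<bar>p\<bar> / 2 > 0" by simp
  then obtain d where d: "d > 0" "\<forall>t\<in>{0..T}. \<bar>t - x\<bar> < d \<longrightarrow> \<bar>g t - g x - p * (t - x)\<bar> \<le> \<bar>p\<bar> / 2 * \<bar>t - x\<bar>"
    using est by blast
  obtain y where y: "y \<in> {0..T}" "y \<noteq> x" "\<bar>y - x\<bar> < d" "g y = g x" using lim d(1) by blast
  have "\<bar>p * (y - x)\<bar> \<le> \<bar>p\<bar> / 2 * \<bar>y - x\<bar>" using d(2) y by fastforce
  then have "\<bar>p\<bar> * \<bar>y - x\<bar> \<le> \<bar>p\<bar> / 2 * \<bar>y - x\<bar>" by (simp add: abs_mult)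
  moreover have "\<bar>p\<bar> * \<bar>y - x\<bar> > 0" using p y by simp
  ultimately show False by linarith
qed

lemma isolated_lattice:
  fixes g :: "real \<Rightarrow> real"
  assumes est: "\<forall>e>0. \<exists>d>0. \<forall>t\<in>{0..T}. \<bar>t - x\<bar> < d \<longrightarrow> \<bar>g t - g x - p * (t - x)\<bar> \<le> e * \<bar>t - x\<bar>"
    and p: "p \<noteq> 0" and gx: "g x = 2 * pi * of_int k0"
  shows "\<exists>d>0. \<forall>y\<in>{0..T}. (\<exists>k::int. g y = 2 * pi * of_int k) \<longrightarrow> \<bar>y - x\<bar> < d \<longrightarrow> y = x"
proof -
  have "\<bar>p\<bar> / 2 > 0" using p by simp
  then obtain d where d: "d > 0" "\<forall>t\<in>{0..T}. \<bar>t - x\<bar> < d \<longrightarrow> \<bar>g t - g x - p * (t - x)\<bar> \<le> \<bar>p\<bar> / 2 * \<bar>t - x\<bar>"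
    using est by blast
  define d' where "d' = min d (pi / \<bar>p\<bar>)"
  have d': "d' > 0" using d p by (simp add: d'_def)
  show ?thesis
  proof (intro exI[of _ d'] conjI d' ballI impI)
    fix y assume y: "y \<in> {0..T}" and "\<exists>k::int. g y = 2 * pi * of_int k" and yd: "\<bar>y - x\<bar> < d'"
    then obtain k :: int where k: "g y = 2 * pi * of_int k" by blast
    have yd1: "\<bar>y - x\<bar> < d" and yd2: "\<bar>y - x\<bar> < pi / \<bar>p\<bar>" using yd by (auto simp: d'_def)
    have e1: "\<bar>g y - g x - p * (y - x)\<bar> \<le> \<bar>p\<bar> / 2 * \<bar>y - x\<bar>" using d(2) y yd1 by blast
    have "\<bar>p\<bar> * \<bar>y - x\<bar> < pi" using yd2 p by (simp add: field_simps)
    moreover have "\<bar>p * (y - x)\<bar> = \<bar>p\<bar> * \<bar>y - x\<bar>" by (simp add: abs_mult)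
    ultimately have "\<bar>g y - g x\<bar> < 2 * pi" using e1 pi_gt_zero by linarith
    then have "\<bar>2 * pi * (of_int k - of_int k0)\<bar> < 2 * pi" using k gx by (simp add: algebra_simps)
    then have "\<bar>real_of_int (k - k0)\<bar> < 1" using pi_gt_zero by (simp add: abs_mult)
    then have "k = k0" by linarith
    then have "g y = g x" using k gx by simp
    then have "\<bar>p\<bar> * \<bar>y - x\<bar> \<le> \<bar>p\<bar> / 2 * \<bar>y - x\<bar>" using e1 by (simp add: abs_mult)
    then show "y = x" using p by (cases "y = x") (auto simp: field_simps)
  qed
qed

lemma countable_isol:
  fixes S :: "real set"
  assumes b: "bounded S" and iso: "\<forall>x\<in>S. \<exists>d>0. \<forall>y\<in>S. \<bar>y - x\<bar> < d \<longrightarrow> y = x"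
  shows "countable S"
proof -
  define Sn where "Sn n = {x\<in>S. \<forall>y\<in>S. \<bar>y - x\<bar> < 1 / real (Suc n) \<longrightarrow> y = x}" for n :: nat
  have "S \<subseteq> (\<Union>n. Sn n)"
  proof
    fix x assume x: "x \<in> S"
    then obtain d where d: "d > 0" "\<forall>y\<in>S. \<bar>y - x\<bar> < d \<longrightarrow> y = x" using iso by blast
    obtain n where n: "inverse (real (Suc n)) < d" using reals_Archimedean[OF d(1)] by blast
    have "x \<in> Sn n" unfolding Sn_def
    proof (intro CollectI conjI ballI impI x)
      fix y assume "y \<in> S" "\<bar>y - x\<bar> < 1 / real (Suc n)"
      moreover have "1 / real (Suc n) = inverse (real (Suc n))" by (simp add: divide_inverse)
      ultimately show "y = x" using d n by auto
    qed
    then show "x \<in> (\<Union>n. Sn n)" by blast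
  qed
  moreover have "finite (Sn n)" for n
  proof -
    have "uniform_discrete (Sn n)"
      by (rule uniformI1[where e="1 / real (Suc n)"]) (auto simp: Sn_def dist_real_def)
    moreover have "bounded (Sn n)" using b by (rule bounded_subset) (auto simp: Sn_def)
    ultimately show ?thesis using uniform_discrete_finite_iff by blast
  qed
  ultimately show ?thesis
    by (meson countable_UN countable_finite countable_subset UNIV_I countableI_type)
qed

lemma det_alg:
  fixes a b l1 l2 :: real
  assumes e1: "l1 * (1 - cos a) + l2 * (1 - cos b) = 0" and e2: "l1 * sin a + l2 * sin b = 0"
    and nz: "(l1, l2) \<noteq> (0, 0)"
  shows "(\<exists>k::int. a = 2 * pi * of_int k) \<or> (\<exists>k::int. b = 2 * pi * of_int k) \<or> (\<exists>k::int. a - b = 2 * pi * of_int k)"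
proof -
  define det where "det = (1 - cos a) * sin b - (1 - cos b) * sin a"
  have h1: "l1 * (1 - cos a) = - (l2 * (1 - cos b))" using e1 by linarith
  have h2: "l1 * sin a = - (l2 * sin b)" using e2 by linarith
  have "l1 * det = 0"
  proof -
    have "l1 * det = (l1 * (1 - cos a)) * sin b - (1 - cos b) * (l1 * sin a)" by (simp add: det_def algebra_simps)
    also have "\<dots> = 0" unfolding h1 h2 by (simp add: algebra_simps)
    finally show ?thesis .
  qed
  moreover have "l2 * det = 0"
  proof -
    have "l2 * det = (1 - cos a) * (l2 * sin b) - (l2 * (1 - cos b)) * sin a" by (simp add: det_def algebra_simps)
    also have "\<dots> = 0" using h1 h2 by (smt (verit) mult.commute mult.left_commute mult_minus_left)
    finally show ?thesis .
  qed
  ultimately have d0: "det = 0" using nz by auto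
  define A where "A = a / 2"
  define B where "B = b / 2"
  have a: "a = 2 * A" and bb: "b = 2 * B" by (simp_all add: A_def B_def)
  have "det = 4 * sin A * sin B * sin (A - B)"
    unfolding det_def a bb cos_double_sin sin_double sin_diff by (simp add: algebra_simps power2_eq_square)
  then have "sin A = 0 \<or> sin B = 0 \<or> sin (A - B) = 0" using d0 by simp
  then show ?thesis
  proof (elim disjE)
    assume "sin A = 0" then obtain i :: int where "A = of_int i * pi" by (auto simp: sin_zero_iff_int2)
    then show ?thesis using a by auto
  next
    assume "sin B = 0" then obtain i :: int where "B = of_int i * pi" by (auto simp: sin_zero_iff_int2)
    then show ?thesis using bb by auto
  next
    assume "sin (A - B) = 0" then obtain i :: int where "A - B = of_int i * pi" by (auto simp: sin_zero_iff_int2)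
    then have "a - b = 2 * pi * of_int i" using a bb by (simp add: algebra_simps)
    then show ?thesis by blast
  qed
qed



theorem mainTheorem4:
  fixes I1 I2 M T l0 :: real and m1 m2 :: nat
    and th1 th2 u l1 l2 :: "real \<Rightarrow> real"
  assumes "I1 > 0" and "I2 > 0" and "I1 \<noteq> I2" and "M > 0"
    and "m1 > 0" and "m2 > 0"
    and "pmp_extremal I1 I2 M m1 m2 T th1 th2 u l0 l1 l2"
  shows "\<not> (\<exists>a b. 0 \<le> a \<and> a < b \<and> b \<le> T \<and> (\<forall>t\<in>{a..b}. switching l1 l2 th1 th2 t = 0))
    \<and> (AE t in lebesgue_on {0..T}.
          (switching l1 l2 th1 th2 t < 0 \<longrightarrow> u t = M) \<and>
          (switching l1 l2 th1 th2 t > 0 \<longrightarrow> u t = - M) \<and>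
          u t \<in> {- M, M})"
proof -
  note ext = assms(7)[unfolded pmp_extremal_def admissible_def]
  have T: "0 < T" and meas: "u \<in> borel_measurable (lebesgue_on {0..T})"
    and ub: "\<forall>s\<in>{0..T}. \<bar>u s\<bar> \<le> M" using ext by auto
  have hth1: "\<forall>t\<in>{0..T}. ((\<lambda>s. fcomp I1 (th1 s) + Zcomp (th1 s) * u s) has_integral (th1 t - th1 0)) {0..t}"
    and hth2: "\<forall>t\<in>{0..T}. ((\<lambda>s. fcomp I2 (th2 s) + Zcomp (th2 s) * u s) has_integral (th2 t - th2 0)) {0..t}"
    using ext by auto
  have hl1': "\<forall>t\<in>{0..T}. ((\<lambda>s. l1 s * sin (th1 s) * (beta I1 - u s)) has_integral (l1 t - l1 0)) {0..t}"
    and hl2': "\<forall>t\<in>{0..T}. ((\<lambda>s. l2 s * sin (th2 s) * (beta I2 - u s)) has_integral (l2 t - l2 0)) {0..t}"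
    using ext by auto
  have lnz: "\<forall>t\<in>{0..T}. (l1 t, l2 t) \<noteq> (0, 0)" using ext by auto
  have minAE: "AE t in lebesgue_on {0..T}.
        (\<forall>v. \<bar>v\<bar> \<le> M \<longrightarrow>
           Ham I1 I2 l0 (l1 t) (l2 t) (th1 t) (th2 t) (u t) \<le> Ham I1 I2 l0 (l1 t) (l2 t) (th1 t) (th2 t) v)"
    using ext by auto
  have ui: "u integrable_on {0..T}"
  proof -
    have "u absolutely_integrable_on {0..T}"
      by (rule measurable_bounded_by_integrable_imp_absolutely_integrable[where g="\<lambda>_. M"])
         (use meas ub in auto)
    then show ?thesis by (simp add: absolutely_integrable_on_def)
  qed
  have eq1: "(\<lambda>s. l1 s * sin (th1 s) * (beta I1 - u s)) =
      (\<lambda>s. l1 s * sin (th1 s) * beta I1 + (- (l1 s * sin (th1 s))) * u s)"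
    by (auto simp: algebra_simps)
  have eq2: "(\<lambda>s. l2 s * sin (th2 s) * (beta I2 - u s)) =
      (\<lambda>s. l2 s * sin (th2 s) * beta I2 + (- (l2 s * sin (th2 s))) * u s)"
    by (auto simp: algebra_simps)
  have hl1: "\<forall>t\<in>{0..T}. ((\<lambda>s. l1 s * sin (th1 s) * beta I1 + (- (l1 s * sin (th1 s))) * u s) has_integral (l1 t - l1 0)) {0..t}"
    using hl1' eq1 by metis
  have hl2: "\<forall>t\<in>{0..T}. ((\<lambda>s. l2 s * sin (th2 s) * beta I2 + (- (l2 s * sin (th2 s))) * u s) has_integral (l2 t - l2 0)) {0..t}"
    using hl2' eq2 by metis
  have cth1: "continuous_on {0..T} th1" by (rule cont_int[OF hth1]) (use T in auto)
  have cth2: "continuous_on {0..T} th2" by (rule cont_int[OF hth2]) (use T in auto)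
  have cl1: "continuous_on {0..T} l1" by (rule cont_int[OF hl1]) (use T in auto)
  have cl2: "continuous_on {0..T} l2" by (rule cont_int[OF hl2]) (use T in auto)
  have Dth1: "Dv u T th1 (fcomp I1 (th1 x)) (Zcomp (th1 x)) x" if "x \<in> {0..T}" for x
    by (rule Dv_basic[OF hth1 ui ub _ _ that]) (unfold Defs.fcomp_def Zcomp_def; intro continuous_intros cth1)+
  have Dth2: "Dv u T th2 (fcomp I2 (th2 x)) (Zcomp (th2 x)) x" if "x \<in> {0..T}" for x
    by (rule Dv_basic[OF hth2 ui ub _ _ that]) (unfold Defs.fcomp_def Zcomp_def; intro continuous_intros cth2)+
  have Dl1: "Dv u T l1 (l1 x * sin (th1 x) * beta I1) (- (l1 x * sin (th1 x))) x" if "x \<in> {0..T}" for x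
    by (rule Dv_basic[OF hl1 ui ub _ _ that]) (intro continuous_intros cth1 cl1)+
  have Dl2: "Dv u T l2 (l2 x * sin (th2 x) * beta I2) (- (l2 x * sin (th2 x))) x" if "x \<in> {0..T}" for x
    by (rule Dv_basic[OF hl2 ui ub _ _ that]) (intro continuous_intros cth2 cl2)+
  have Dphi: "Dv u T (switching l1 l2 th1 th2) (2 * (l1 x * sin (th1 x) + l2 x * sin (th2 x))) 0 x"
    if x: "x \<in> {0..T}" for x
    using Dth1[OF x] Dth2[OF x] Dl1[OF x] Dl2[OF x]
    unfolding Dv_def switching_def Zcomp_def
    apply -
    apply (rule has_derivative_eq_rhs)
     apply (rule derivative_intros | assumption)+
    apply (simp add: fun_eq_iff Defs.fcomp_def alpha_def beta_def algebra_simps)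
    done

  have est_phi: "\<forall>e>0. \<exists>d>0. \<forall>t\<in>{0..T}. \<bar>t - x\<bar> < d \<longrightarrow>
      \<bar>switching l1 l2 th1 th2 t - switching l1 l2 th1 th2 x - (2 * (l1 x * sin (th1 x) + l2 x * sin (th2 x))) * (t - x)\<bar> \<le> e * \<bar>t - x\<bar>"
    if x: "x \<in> {0..T}" for x
    by (rule Dv_real[OF Dphi[OF x] ui ub x])
  define E where "E = {t\<in>{0..T}. switching l1 l2 th1 th2 t = 0}"
  define Eiso where "Eiso = {x\<in>E. \<exists>d>0. \<forall>y\<in>E. \<bar>y - x\<bar> < d \<longrightarrow> y = x}"
  define N1 where "N1 = {t\<in>{0..T}. \<exists>k::int. th1 t = 2 * pi * of_int k}"
  define N2 where "N2 = {t\<in>{0..T}. \<exists>k::int. th2 t = 2 * pi * of_int k}"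
  define N3 where "N3 = {t\<in>{0..T}. (\<exists>k::int. th1 t - th2 t = 2 * pi * of_int k) \<and> cos (th1 t) \<noteq> 1}"
  have bd: "bounded S" if "S \<subseteq> {0..T}" for S :: "real set"
    using bounded_subset[OF bounded_closed_interval that] .
  have cEiso: "countable Eiso"
  proof (rule countable_isol)
    show "bounded Eiso" by (rule bd) (auto simp: Eiso_def E_def)
    show "\<forall>x\<in>Eiso. \<exists>d>0. \<forall>y\<in>Eiso. \<bar>y - x\<bar> < d \<longrightarrow> y = x"
      unfolding Eiso_def by blast
  qed
  have cN1: "countable N1"
  proof (rule countable_isol)
    show "bounded N1" by (rule bd) (auto simp: N1_def)
    show "\<forall>x\<in>N1. \<exists>d>0. \<forall>y\<in>N1. \<bar>y - x\<bar> < d \<longrightarrow> y = x"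
    proof
      fix x assume "x \<in> N1"
      then obtain k0 :: int where x: "x \<in> {0..T}" and k0: "th1 x = 2 * pi * of_int k0" by (auto simp: N1_def)
      have "Zcomp (th1 x) = 0" "fcomp I1 (th1 x) = 2"
        using k0 by (simp_all add: Zcomp_def Defs.fcomp_def alpha_def beta_def)
      then have "Dv u T th1 2 0 x" using Dth1[OF x] by simp
      then have est: "\<forall>e>0. \<exists>d>0. \<forall>t\<in>{0..T}. \<bar>t - x\<bar> < d \<longrightarrow> \<bar>th1 t - th1 x - 2 * (t - x)\<bar> \<le> e * \<bar>t - x\<bar>"
        by (rule Dv_real[OF _ ui ub x])
      from isolated_lattice[OF est _ k0] obtain d where
        "d > 0" "\<forall>y\<in>{0..T}. (\<exists>k::int. th1 y = 2 * pi * of_int k) \<longrightarrow> \<bar>y - x\<bar> < d \<longrightarrow> y = x" by auto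
      then show "\<exists>d>0. \<forall>y\<in>N1. \<bar>y - x\<bar> < d \<longrightarrow> y = x" by (auto simp: N1_def)
    qed
  qed
  have cN2: "countable N2"
  proof (rule countable_isol)
    show "bounded N2" by (rule bd) (auto simp: N2_def)
    show "\<forall>x\<in>N2. \<exists>d>0. \<forall>y\<in>N2. \<bar>y - x\<bar> < d \<longrightarrow> y = x"
    proof
      fix x assume "x \<in> N2"
      then obtain k0 :: int where x: "x \<in> {0..T}" and k0: "th2 x = 2 * pi * of_int k0" by (auto simp: N2_def)
      have "Zcomp (th2 x) = 0" "fcomp I2 (th2 x) = 2"
        using k0 by (simp_all add: Zcomp_def Defs.fcomp_def alpha_def beta_def)
      then have "Dv u T th2 2 0 x" using Dth2[OF x] by simp
      then have est: "\<forall>e>0. \<exists>d>0. \<forall>t\<in>{0..T}. \<bar>t - x\<bar> < d \<longrightarrow> \<bar>th2 t - th2 x - 2 * (t - x)\<bar> \<le> e * \<bar>t - x\<bar>"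
        by (rule Dv_real[OF _ ui ub x])
      from isolated_lattice[OF est _ k0] obtain d where
        "d > 0" "\<forall>y\<in>{0..T}. (\<exists>k::int. th2 y = 2 * pi * of_int k) \<longrightarrow> \<bar>y - x\<bar> < d \<longrightarrow> y = x" by auto
      then show "\<exists>d>0. \<forall>y\<in>N2. \<bar>y - x\<bar> < d \<longrightarrow> y = x" by (auto simp: N2_def)
    qed
  qed
  have cN3: "countable N3"
  proof (rule countable_isol)
    show "bounded N3" by (rule bd) (auto simp: N3_def)
    show "\<forall>x\<in>N3. \<exists>d>0. \<forall>y\<in>N3. \<bar>y - x\<bar> < d \<longrightarrow> y = x"
    proof
      fix x assume "x \<in> N3"
      then obtain k0 :: int where x: "x \<in> {0..T}" and k0: "th1 x - th2 x = 2 * pi * of_int k0"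
        and c1: "cos (th1 x) \<noteq> 1" by (auto simp: N3_def)
      have "th1 x = th2 x + 2 * pi * of_int k0" using k0 by simp
      then have cc: "cos (th1 x) = cos (th2 x)" by (simp add: cos_add)
      define p where "p = fcomp I1 (th1 x) - fcomp I2 (th2 x)"
      have pe: "p = (I1 - I2) * (1 - cos (th1 x))"
        using cc by (simp add: p_def Defs.fcomp_def alpha_def beta_def algebra_simps)
      have p0: "p \<noteq> 0" unfolding pe using assms(3) c1 by simp
      have "Dv u T (\<lambda>t. th1 t - th2 t) p 0 x"
        using Dth1[OF x] Dth2[OF x] unfolding Dv_def
        apply -
        apply (rule has_derivative_eq_rhs)
         apply (rule has_derivative_diff; assumption)
        apply (simp add: fun_eq_iff p_def Zcomp_def cc algebra_simps)
        done
      then have est: "\<forall>e>0. \<exists>d>0. \<forall>t\<in>{0..T}. \<bar>t - x\<bar> < d \<longrightarrow> \<bar>(th1 t - th2 t) - (th1 x - th2 x) - p * (t - x)\<bar> \<le> e * \<bar>t - x\<bar>"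
        by (rule Dv_real[OF _ ui ub x])
      from isolated_lattice[OF est p0 k0] obtain d where
        "d > 0" "\<forall>y\<in>{0..T}. (\<exists>k::int. th1 y - th2 y = 2 * pi * of_int k) \<longrightarrow> \<bar>y - x\<bar> < d \<longrightarrow> y = x" by auto
      then show "\<exists>d>0. \<forall>y\<in>N3. \<bar>y - x\<bar> < d \<longrightarrow> y = x" by (auto simp: N3_def)
    qed
  qed
  have sub: "E \<subseteq> Eiso \<union> N1 \<union> N2 \<union> N3"
  proof
    fix x assume xE: "x \<in> E"
    then have x: "x \<in> {0..T}" and phx: "switching l1 l2 th1 th2 x = 0" by (auto simp: E_def)
    show "x \<in> Eiso \<union> N1 \<union> N2 \<union> N3"
    proof (cases "x \<in> Eiso")
      case True then show ?thesis by blast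
    next
      case False
      have lim: "\<forall>d>0. \<exists>y\<in>{0..T}. y \<noteq> x \<and> \<bar>y - x\<bar> < d \<and> switching l1 l2 th1 th2 y = switching l1 l2 th1 th2 x"
      proof (intro allI impI)
        fix d :: real assume d: "d > 0"
        from False xE d obtain y where "y \<in> E" "\<bar>y - x\<bar> < d" "y \<noteq> x" by (auto simp: Eiso_def)
        then show "\<exists>y\<in>{0..T}. y \<noteq> x \<and> \<bar>y - x\<bar> < d \<and> switching l1 l2 th1 th2 y = switching l1 l2 th1 th2 x"
          using phx by (auto simp: E_def)
      qed
      have "2 * (l1 x * sin (th1 x) + l2 x * sin (th2 x)) = 0"
        by (rule deriv_zero_limpt[OF est_phi[OF x] lim])
      then have e2: "l1 x * sin (th1 x) + l2 x * sin (th2 x) = 0" by simp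
      have e1: "l1 x * (1 - cos (th1 x)) + l2 x * (1 - cos (th2 x)) = 0"
        using phx by (simp add: switching_def Zcomp_def)
      from det_alg[OF e1 e2 lnz[rule_format, OF x]] show ?thesis
      proof (elim disjE)
        assume "\<exists>k::int. th1 x = 2 * pi * of_int k" then show ?thesis using x by (auto simp: N1_def)
      next
        assume "\<exists>k::int. th2 x = 2 * pi * of_int k" then show ?thesis using x by (auto simp: N2_def)
      next
        assume k: "\<exists>k::int. th1 x - th2 x = 2 * pi * of_int k"
        show ?thesis
        proof (cases "cos (th1 x) = 1")
          case True
          then obtain n :: int where "th1 x = n * 2 * pi" by (auto simp: cos_one_2pi_int)
          then have "th1 x = 2 * pi * of_int n" by simp
          then show ?thesis using x by (auto simp: N1_def)
        next
          case False then show ?thesis using x k by (auto simp: N3_def)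
        qed
      qed
    qed
  qed
  have cE: "countable E"
    using sub cEiso cN1 cN2 cN3 by (meson countable_Un countable_subset)
  have negE: "negligible E"
  proof -
    have "negligible (\<Union>((\<lambda>x. {x}) ` E))"
      by (rule negligible_countable_Union) (use cE in auto)
    then show ?thesis by simp
  qed
  have part1: "\<not> (\<exists>a b. 0 \<le> a \<and> a < b \<and> b \<le> T \<and> (\<forall>t\<in>{a..b}. switching l1 l2 th1 th2 t = 0))"
  proof
    assume "\<exists>a b. 0 \<le> a \<and> a < b \<and> b \<le> T \<and> (\<forall>t\<in>{a..b}. switching l1 l2 th1 th2 t = 0)"
    then obtain a b where ab: "0 \<le> a" "a < b" "b \<le> T" "\<forall>t\<in>{a..b}. switching l1 l2 th1 th2 t = 0" by blast
    then have "{a..b} \<subseteq> E" by (auto simp: E_def)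
    then have "negligible (cbox a b)" using negE negligible_subset by auto
    with negligible_interval(1)[of a b] have "box a b = {}" by blast
    moreover have "(a + b) / 2 \<in> box a b" using ab by auto
    ultimately show False by blast
  qed
  have AEE: "AE t in lebesgue. t \<notin> E"
    using negE by (simp add: negligible_iff_null_sets AE_not_in)
  have sets0: "{0..T} \<inter> space lebesgue \<in> sets lebesgue" by simp
  have minAE': "AE t in lebesgue. t \<in> {0..T} \<longrightarrow> (\<forall>v. \<bar>v\<bar> \<le> M \<longrightarrow>
           Ham I1 I2 l0 (l1 t) (l2 t) (th1 t) (th2 t) (u t) \<le> Ham I1 I2 l0 (l1 t) (l2 t) (th1 t) (th2 t) v)"
    using minAE unfolding AE_restrict_space_iff[OF sets0] .
  have part2: "AE t in lebesgue_on {0..T}.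
          (switching l1 l2 th1 th2 t < 0 \<longrightarrow> u t = M) \<and>
          (switching l1 l2 th1 th2 t > 0 \<longrightarrow> u t = - M) \<and>
          u t \<in> {- M, M}"
    unfolding AE_restrict_space_iff[OF sets0]
    using AEE minAE'
  proof eventually_elim
    case (elim t)
    show ?case
    proof
      assume t: "t \<in> {0..T}"
      define s where "s = switching l1 l2 th1 th2 t"
      have s0: "s \<noteq> 0" using elim(1) t by (auto simp: E_def s_def)
      have ut: "\<bar>u t\<bar> \<le> M" using ub t by auto
      have Hv: "Ham I1 I2 l0 (l1 t) (l2 t) (th1 t) (th2 t) v
          = Ham I1 I2 l0 (l1 t) (l2 t) (th1 t) (th2 t) 0 + s * v" for v
        by (simp add: Ham_def s_def switching_def algebra_simps)
      have mn: "s * u t \<le> s * v" if "\<bar>v\<bar> \<le> M" for v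
        using elim(2) t that Hv[of v] Hv[of "u t"] by auto
      have A: "u t = M" if "s < 0"
      proof -
        have "s * u t \<le> s * M" using mn[of M] assms(4) by simp
        then have "M \<le> u t" using that by (simp add: mult_le_cancel_left)
        then show ?thesis using ut by simp
      qed
      have B: "u t = - M" if "s > 0"
      proof -
        have "s * u t \<le> s * (- M)" using mn[of "- M"] assms(4) by simp
        then have "u t \<le> - M" using that by (metis mult_le_cancel_left_pos)
        then show ?thesis using ut by simp
      qed
      show "(switching l1 l2 th1 th2 t < 0 \<longrightarrow> u t = M) \<and>
          (switching l1 l2 th1 th2 t > 0 \<longrightarrow> u t = - M) \<and> u t \<in> {- M, M}"
        using A B s0 unfolding s_def[symmetric] by (auto simp: neq_iff)
    qed
  qed
  show ?thesis using part1 part2 by blast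
qed


end
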